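(* For every $r\ge1$, $C_{1,r}(a)=G_{1,r+1}(a)$, that is, \[ (-1)^r\sum_{(n_1,\dots,n_r)\in S_r}\frac{B_{n_1}(a)}{n_1!}\cdots\frac{B_{n_r}(a)}{n_r!}=(-1)^r\lambda_{r+1}(a), \] where $S_r=\{(n_1,\dots,n_r)\in\mathbb Z_{\ge0}^r: n_1+\dots+n_r=r,\ n_{j+1}+\dots+n_r\le r-j\ (1\le j<r)\}$.
   Context: Bernoulli polynomials $B_n(a)$: $\sum_{n\ge0}B_n(a)x^n/n!=xe^{ax}/(e^x-1)$. $C_{1,r}(a)$ denotes the left-hand side of the displayed identity. Let $L(a,t)=\sum_{n\ge1}\lambda_n(a)t^n\in\mathbb Q[a][[t]]$ be the compositional inverse (in $t$) of $e^{-at}(e^t-1)$, equivalently the unique such series with $e^{L(a,t)}(1-te^{(a-1)L(a,t)})=1$. The generalized Gregory polynomials $G_{m,n}(a)$ are defined by $\sum_{m,n\ge0}G_{m,n}(a)x^my^n=\dfrac{yL(a,-x)^2-xL(a,-y)^2}{-L(a,-x)+L(a,-y)}$. *)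

theory Defs
  imports "HOL-Computational_Algebra.Formal_Power_Series"
begin

definition bernpoly_egf :: "real \<Rightarrow> real fps" where
  "bernpoly_egf a = fps_X * fps_exp a / (fps_exp 1 - 1)"

definition bernpoly :: "nat \<Rightarrow> real \<Rightarrow> real" where
  "bernpoly n a = fact n * fps_nth (bernpoly_egf a) n"

definition gregL :: "real \<Rightarrow> real fps" where
  "gregL a = fps_inv (fps_exp (- a) * (fps_exp 1 - 1))"

definition lambda_coeff :: "nat \<Rightarrow> real \<Rightarrow> real" where
  "lambda_coeff n a = fps_nth (gregL a) n"

(* S_r, with (n_1,...,n_r) encoded as a list ns of length r, ns ! (j-1) = n_j;
   n_{j+1}+...+n_r = sum_list (drop j ns) *)
definition S_set :: "nat \<Rightarrow> nat list set" where
  "S_set r = {ns. length ns = r \<and> sum_list ns = r \<and>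
                 (\<forall>j. 1 \<le> j \<and> j < r \<longrightarrow> sum_list (drop j ns) \<le> r - j)}"

end

theory Submission imports Defs begin

lemma g_props:
  fixes a :: real
  shows "fps_nth (fps_exp (- a) * (fps_exp 1 - 1)) 0 = 0" "fps_nth (fps_exp (- a) * (fps_exp 1 - 1)) 1 = 1"
  by (simp_all add: fps_mult_nth)

lemma gf_X:
  fixes a :: real
  shows "(fps_exp (- a) * (fps_exp 1 - 1)) * bernpoly_egf a = fps_X"
proof -
  let ?D = "fps_exp (1::real) - 1"
  let ?N = "fps_X * fps_exp a :: real fps"
  have D1: "fps_nth ?D 1 = 1" by simp
  have Dnz: "?D \<noteq> 0" using D1 by (metis fps_zero_nth zero_neq_one)
  have "subdegree ?D \<le> 1" using D1 by (intro subdegree_leI) simp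
  moreover have "subdegree ?N \<ge> 1"
    by (rule subdegree_geI) (auto simp: fps_eq_iff intro!: exI[of _ 1])
  ultimately have "?N / ?D * ?D = ?N" using Dnz by (intro fps_times_divide_eq) auto
  hence "?D * bernpoly_egf a = ?N" by (simp add: bernpoly_egf_def mult.commute)
  hence "(fps_exp (- a) * ?D) * bernpoly_egf a = fps_exp (-a) * ?N"
    by (simp add: mult.assoc)
  also have "\<dots> = fps_X * (fps_exp (-a) * fps_exp a)" by (simp add: algebra_simps)
  also have "fps_exp (-a) * fps_exp a = 1" by (simp flip: fps_exp_add_mult)
  finally show ?thesis by simp
qed

lemma L_eq:
  fixes a :: real
  shows "gregL a = fps_X * (bernpoly_egf a oo gregL a)" and "fps_nth (gregL a) 0 = 0"
proof -
  let ?g = "fps_exp (- a) * (fps_exp 1 - 1) :: real fps"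
  let ?L = "gregL a"
  have L0: "fps_nth ?L 0 = 0" by (simp add: gregL_def fps_inv_def)
  have gL: "?g oo ?L = fps_X" unfolding gregL_def using g_props[of a]
    by (intro fps_inv_right) auto
  have "?L = (?g * bernpoly_egf a) oo ?L" using L0 by (simp add: gf_X)
  also have "\<dots> = (?g oo ?L) * (bernpoly_egf a oo ?L)"
    using L0 by (rule fps_compose_mult_distrib)
  finally show "?L = fps_X * (bernpoly_egf a oo ?L)" using gL by simp
  show "fps_nth ?L 0 = 0" by (rule L0)
qed

lemma f0: "fps_nth (bernpoly_egf a) 0 = 1"
proof -
  have "fps_nth ((fps_exp (- a) * (fps_exp 1 - 1)) * bernpoly_egf a) 1 = 1"
    by (simp add: gf_X)
  thus ?thesis using g_props[of a] by (simp add: fps_mult_nth)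
qed


lemma L_pow_rec:
  fixes a :: real
  defines "L \<equiv> gregL a" and "b \<equiv> fps_nth (bernpoly_egf a)"
  shows "fps_nth (L ^ Suc k) (Suc n) = (\<Sum>i=0..n. (if k \<le> i then b (i - k) else 0) * fps_nth (L ^ i) n)"
proof -
  have L0: "fps_nth L 0 = 0" using L_eq(2) by (simp add: L_def)
  have p: "(fps_X oo L) ^ k = fps_X ^ k oo L" by (rule fps_compose_power[OF L0])
  have "L ^ Suc k = L * (fps_X oo L) ^ k" using L0 by simp
  also have "\<dots> = L * (fps_X ^ k oo L)" by (simp only: p)
  also have "\<dots> = fps_X * (bernpoly_egf a oo L) * (fps_X ^ k oo L)"
  proof -
    have Leq: "L = fps_X * (bernpoly_egf a oo L)" unfolding L_def by (rule L_eq(1))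
    show ?thesis by (rule arg_cong[where f="\<lambda>z. z * (fps_X ^ k oo L)"], rule Leq)
  qed
  also have "\<dots> = fps_X * ((fps_X ^ k * bernpoly_egf a) oo L)"
    using L0 by (simp add: fps_compose_mult_distrib mult.commute mult.left_commute)
  finally have "fps_nth (L ^ Suc k) (Suc n) = fps_nth ((fps_X ^ k * bernpoly_egf a) oo L) n"
    by simp
  also have "\<dots> = (\<Sum>i=0..n. (if k \<le> i then b (i - k) else 0) * fps_nth (L ^ i) n)"
    unfolding fps_compose_nth fps_X_power_mult_nth b_def by (intro sum.cong) auto
  finally show ?thesis .
qed

fun luk :: "nat \<Rightarrow> nat list \<Rightarrow> bool" where
  "luk k [] = (k = 0)"
| "luk k (x # xs) = (k \<ge> 1 \<and> luk (k - 1 + x) xs)"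

lemma luk_char:
  "luk k xs \<longleftrightarrow> k + sum_list xs = length xs \<and> (\<forall>j < length xs. j < k + sum_list (take j xs))"
proof (induction xs arbitrary: k)
  case Nil
  then show ?case by simp
next
  case (Cons x xs)
  show ?case
  proof
    assume "luk k (x # xs)"
    then have k1: "k \<ge> 1" and l: "luk (k - 1 + x) xs" by auto
    have c: "k - 1 + x + sum_list xs = length xs \<and> (\<forall>j < length xs. j < k - 1 + x + sum_list (take j xs))"
      using iffD1[OF Cons.IH[of "k - 1 + x"] l] .
    from c have s: "k - 1 + x + sum_list xs = length xs" by (rule conjunct1)
    from c have al: "\<forall>j < length xs. j < k - 1 + x + sum_list (take j xs)" by (rule conjunct2)
    show "k + sum_list (x # xs) = length (x # xs) \<and>
      (\<forall>j < length (x # xs). j < k + sum_list (take j (x # xs)))"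
    proof (intro conjI allI impI)
      show "k + sum_list (x # xs) = length (x # xs)" using k1 s by simp
      fix j assume j: "j < length (x # xs)"
      show "j < k + sum_list (take j (x # xs))"
      proof (cases j)
        case 0
        then show ?thesis using k1 by simp
      next
        case (Suc j')
        then have "j' < length xs" using j by simp
        then have "j' < k - 1 + x + sum_list (take j' xs)" by (rule al[rule_format])
        then show ?thesis using Suc k1 by simp
      qed
    qed
  next
    assume H: "k + sum_list (x # xs) = length (x # xs) \<and>
      (\<forall>j < length (x # xs). j < k + sum_list (take j (x # xs)))"
    from H have s: "k + sum_list (x # xs) = length (x # xs)" by (rule conjunct1)
    from H have al: "\<forall>j < length (x # xs). j < k + sum_list (take j (x # xs))" by (rule conjunct2)
    have "0 < k + sum_list (take 0 (x # xs))" by (rule al[rule_format]) simp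
    then have k1: "k \<ge> 1" by simp
    have "k - 1 + x + sum_list xs = length xs \<and>
      (\<forall>j < length xs. j < k - 1 + x + sum_list (take j xs))"
    proof (intro conjI allI impI)
      show "k - 1 + x + sum_list xs = length xs" using s k1 by simp
      fix j assume "j < length xs"
      then have "Suc j < k + sum_list (take (Suc j) (x # xs))" by (intro al[rule_format]) simp
      then show "j < k - 1 + x + sum_list (take j xs)" using k1 by simp
    qed
    then have "luk (k - 1 + x) xs" by (rule iffD2[OF Cons.IH[of "k - 1 + x"]])
    then show "luk k (x # xs)" using k1 by simp
  qed
qed

lemma luk_sum: "luk k xs \<Longrightarrow> k + sum_list xs = length xs"
  using luk_char by blast

definition Lk :: "nat \<Rightarrow> nat \<Rightarrow> nat list set" where
  "Lk n k = {xs. length xs = n \<and> luk k xs}"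

lemma Lk_finite: "finite (Lk n k)"
proof -
  have "Lk n k \<subseteq> {xs. set xs \<subseteq> {..n} \<and> length xs = n}"
  proof
    fix xs assume "xs \<in> Lk n k"
    then have "sum_list xs \<le> n" "length xs = n" using luk_sum[of k xs] by (auto simp: Lk_def)
    moreover have "\<And>x. x \<in> set xs \<Longrightarrow> x \<le> sum_list xs"
      by (simp add: member_le_sum_list)
    ultimately show "xs \<in> {xs. set xs \<subseteq> {..n} \<and> length xs = n}" by force
  qed
  then show ?thesis by (rule finite_subset) (simp add: finite_lists_length_eq)
qed

definition F :: "(nat \<Rightarrow> real) \<Rightarrow> nat \<Rightarrow> nat \<Rightarrow> real" where
  "F b n k = (\<Sum>xs\<in>Lk n k. \<Prod>x\<leftarrow>xs. b x)"

lemma F_0: "F b 0 k = (if k = 0 then 1 else 0)"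
proof -
  have "Lk 0 k = (if k = 0 then {[]} else {})" by (auto simp: Lk_def)
  then show ?thesis by (simp add: F_def)
qed

lemma F_Suc_0: "F b (Suc n) 0 = 0"
proof -
  have "Lk (Suc n) 0 = {}" by (auto simp: Lk_def length_Suc_conv)
  then show ?thesis by (simp add: F_def)
qed

lemma F_Suc_Suc: "F b (Suc n) (Suc k) = (\<Sum>i=0..n. (if k \<le> i then b (i - k) else 0) * F b n i)"
proof -
  have eq: "Lk (Suc n) (Suc k) = (\<Union>i\<in>{k..n}. (\<lambda>ys. (i - k) # ys) ` Lk n i)"
  proof (rule set_eqI)
    fix xs
    show "xs \<in> Lk (Suc n) (Suc k) \<longleftrightarrow> xs \<in> (\<Union>i\<in>{k..n}. (\<lambda>ys. (i - k) # ys) ` Lk n i)"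
    proof
      assume "xs \<in> Lk (Suc n) (Suc k)"
      then obtain x ys where xs: "xs = x # ys" "length ys = n" "luk (k + x) ys"
        by (auto simp: Lk_def length_Suc_conv)
      then have "k + x \<le> n" using luk_sum[of "k + x" ys] by simp
      then show "xs \<in> (\<Union>i\<in>{k..n}. (\<lambda>ys. (i - k) # ys) ` Lk n i)"
        using xs by (auto simp: Lk_def intro!: bexI[of _ "k + x"])
    next
      assume "xs \<in> (\<Union>i\<in>{k..n}. (\<lambda>ys. (i - k) # ys) ` Lk n i)"
      then show "xs \<in> Lk (Suc n) (Suc k)" by (auto simp: Lk_def)
    qed
  qed
  have "F b (Suc n) (Suc k) = (\<Sum>i\<in>{k..n}. \<Sum>xs\<in>(\<lambda>ys. (i - k) # ys) ` Lk n i. \<Prod>x\<leftarrow>xs. b x)"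
    unfolding F_def eq
    by (rule sum.UNION_disjoint) (auto simp: Lk_finite)
  also have "\<dots> = (\<Sum>i\<in>{k..n}. b (i - k) * F b n i)"
    by (rule sum.cong[OF refl]) (simp add: sum.reindex F_def sum_distrib_left)
  also have "\<dots> = (\<Sum>i\<in>{0..n} \<inter> {i. k \<le> i}. b (i - k) * F b n i)"
    by (rule sum.cong) auto
  also have "\<dots> = (\<Sum>i=0..n. (if k \<le> i then b (i - k) * F b n i else 0))"
    by (simp add: sum.inter_restrict)
  also have "\<dots> = (\<Sum>i=0..n. (if k \<le> i then b (i - k) else 0) * F b n i)"
    by (rule sum.cong) auto
  finally show ?thesis .
qed

lemma L_F:
  fixes a :: real
  shows "fps_nth (gregL a ^ k) n = F (fps_nth (bernpoly_egf a)) n k"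
proof (induction n arbitrary: k)
  case 0
  then show ?case using L_eq(2)[of a] by (simp add: fps_nth_power_0 F_0)
next
  case (Suc n)
  then show ?case
  proof (cases k)
    case 0
    then show ?thesis by (simp add: F_Suc_0)
  next
    case (Suc k')
    then show ?thesis using Suc.IH L_pow_rec[of a k' n] by (simp add: F_Suc_Suc)
  qed
qed


lemma sum_take_drop: "sum_list (take j ns) + sum_list (drop j ns) = sum_list ns"
  by (metis append_take_drop_id sum_list_append)

lemma S_Lk: "(\<lambda>ns. ns @ [0]) ` S_set r = Lk (Suc r) 1"
proof (rule set_eqI)
  fix xs
  show "xs \<in> (\<lambda>ns. ns @ [0]) ` S_set r \<longleftrightarrow> xs \<in> Lk (Suc r) 1"
  proof
    assume "xs \<in> (\<lambda>ns. ns @ [0]) ` S_set r"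
    then obtain ns where ns: "ns \<in> S_set r" and xs: "xs = ns @ [0]" by blast
    from ns have len: "length ns = r" and sm: "sum_list ns = r"
      and cond: "\<And>j. 1 \<le> j \<Longrightarrow> j < r \<Longrightarrow> sum_list (drop j ns) \<le> r - j"
      by (auto simp: S_set_def)
    have "\<forall>j < length xs. j < 1 + sum_list (take j xs)"
    proof (intro allI impI)
      fix j assume "j < length xs"
      then have jr: "j \<le> r" using xs len by simp
      have tk: "take j xs = take j ns" using xs len jr by simp
      have "j \<le> sum_list (take j ns)"
      proof (cases "j = 0 \<or> j = r")
        case True
        then show ?thesis using len sm by auto
      next
        case False
        then have j1: "1 \<le> j" and jr': "j < r" using jr by auto
        then have "sum_list (drop j ns) \<le> r - j" by (rule cond)
        then show ?thesis using sum_take_drop[of j ns] sm jr' by linarith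
      qed
      then show "j < 1 + sum_list (take j xs)" using tk by simp
    qed
    moreover have "1 + sum_list xs = length xs" using xs len sm by simp
    ultimately have "luk 1 xs" using luk_char by blast
    then show "xs \<in> Lk (Suc r) 1" using xs len by (simp add: Lk_def)
  next
    assume "xs \<in> Lk (Suc r) 1"
    then have lx: "length xs = Suc r" and lk: "luk 1 xs" by (auto simp: Lk_def)
    from lk have s: "1 + sum_list xs = length xs" and
      al: "\<forall>j < length xs. j < 1 + sum_list (take j xs)" using luk_char by blast+
    obtain ns y where xs: "xs = ns @ [y]" using lx by (cases xs rule: rev_exhaust) auto
    have len: "length ns = r" using xs lx by simp
    have "r < 1 + sum_list (take r xs)" using lx by (intro al[rule_format]) simp
    then have "r \<le> sum_list ns" using xs len by simp
    with s xs lx have y0: "y = 0" and sm: "sum_list ns = r" by auto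
    have "ns \<in> S_set r"
      unfolding S_set_def
    proof (intro CollectI conjI allI impI)
      show "length ns = r" by (rule len)
      show "sum_list ns = r" by (rule sm)
      fix j assume j: "1 \<le> j \<and> j < r"
      then have "j < 1 + sum_list (take j xs)" using lx by (intro al[rule_format]) simp
      then have "j \<le> sum_list (take j ns)" using xs len j by simp
      then show "sum_list (drop j ns) \<le> r - j" using sum_take_drop[of j ns] sm by linarith
    qed
    then show "xs \<in> (\<lambda>ns. ns @ [0]) ` S_set r" using xs y0 by blast
  qed
qed

theorem theorem6p7:
  fixes r :: nat and a :: real
  assumes "r \<ge> 1"
  shows "(-1) ^ r * (\<Sum>ns\<in>S_set r. \<Prod>n\<leftarrow>ns. bernpoly n a / fact n)
           = (-1) ^ r * lambda_coeff (r + 1) a"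
proof -
  let ?b = "fps_nth (bernpoly_egf a)"
  have bb: "\<And>n. bernpoly n a / fact n = ?b n" by (simp add: bernpoly_def)
  have "(\<Sum>ns\<in>S_set r. \<Prod>n\<leftarrow>ns. bernpoly n a / fact n) = (\<Sum>ns\<in>S_set r. \<Prod>n\<leftarrow>ns @ [0]. ?b n)"
    by (simp add: bb f0)
  also have "\<dots> = (\<Sum>xs\<in>(\<lambda>ns. ns @ [0]) ` S_set r. \<Prod>n\<leftarrow>xs. ?b n)"
    by (rule sum.reindex[symmetric, unfolded comp_def]) (simp add: inj_on_def)
  also have "\<dots> = F ?b (Suc r) 1" by (simp add: S_Lk F_def)
  also have "\<dots> = lambda_coeff (r + 1) a"
    using L_F[of a 1 "Suc r"] by (simp add: lambda_coeff_def)
  finally show ?thesis by simp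
qed

end
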